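(* Let $p\in(0,1)$ and let $(\lambda_n)_{n\ge1}$ be a sequence with $\lambda_1=1$ and $0\le\lambda_n\le\lambda_{n-1}$ for all $n>1$. Let $r_1,r_2,\dots$ be $\{0,1\}$-valued random variables with $\Pr(r_1=1)=p$ and, for every $n\ge2$, $\Pr(r_n=1\mid r_1,\dots,r_{n-1})=\lambda_n p+(1-\lambda_n)\bar p_{n-1}$, where $\bar p_m=\frac1m\sum_{i=1}^m r_i$. Then for every $n\ge1$, \[\mathbb{E}\big[(\bar p_n-p)^2\big]=p(1-p)\Big(\frac1{n^2}+\sum_{i=1}^{n-1}\frac1{i^2}\prod_{j=i+1}^{n}\frac{(j-1)(j+1-2\lambda_j)}{j^2}\Big).\] *)

theory Defs
  imports "HOL-Probability.Probability"
begin

definition pbar :: "(nat \<Rightarrow> 'a \<Rightarrow> bool) \<Rightarrow> nat \<Rightarrow> 'a \<Rightarrow> real" where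
  "pbar r m w = (\<Sum>i=1..m. of_bool (r i w)) / real m"

end

theory Submission imports Defs begin

definition pat :: "(nat \<Rightarrow> 'a \<Rightarrow> bool) \<Rightarrow> nat \<Rightarrow> 'a \<Rightarrow> nat \<Rightarrow> bool" where
  "pat r N w = (\<lambda>i. i \<in> {1..<N} \<and> r i w)"

definition Bs :: "nat \<Rightarrow> (nat \<Rightarrow> bool) set" where
  "Bs N = (\<lambda>S i. i \<in> S) ` Pow {1..<N}"

definition pb :: "(nat \<Rightarrow> bool) \<Rightarrow> nat \<Rightarrow> real" where
  "pb b m = (\<Sum>i=1..m. of_bool (b i)) / real m"

lemma finite_Bs: "finite (Bs N)"
  unfolding Bs_def by simp

lemma pat_in_Bs: "pat r N w \<in> Bs N"
  unfolding Bs_def pat_def by (rule image_eqI[of _ _ "{i\<in>{1..<N}. r i w}"]) auto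

lemma pat_eq_iff: "b \<in> Bs N \<Longrightarrow> (pat r N w = b) \<longleftrightarrow> (\<forall>i\<in>{1..<N}. r i w = b i)"
  unfolding Bs_def pat_def by (auto simp: fun_eq_iff)

lemma pbar_pat: "m < N \<Longrightarrow> pbar r m w = pb (pat r N w) m"
  unfolding pbar_def pb_def pat_def by (intro arg_cong2[where f="(/)"] sum.cong) auto

lemma simple_int:
  assumes "finite B" "\<And>b. b \<in> B \<Longrightarrow> A b \<in> sets M" "finite_measure M"
    and "\<And>w. w \<in> space M \<Longrightarrow> F w = (\<Sum>b\<in>B. c b * indicator (A b) w)"
  shows "integrable M F \<and> integral\<^sup>L M F = (\<Sum>b\<in>B. c b * measure M (A b))"
proof -
  have ii: "integrable M (\<lambda>w. c b * indicator (A b) w)" if "b \<in> B" for b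
  proof -
    from that have "A b \<in> sets M" by (rule assms(2))
    moreover have "emeasure M (A b) < \<infinity>" using finite_measure.emeasure_finite[OF assms(3)] by (simp add: less_top)
    ultimately show "integrable M (\<lambda>w. c b * indicator (A b) w)" by simp
  qed
  have i: "integrable M (\<lambda>w. \<Sum>b\<in>B. c b * indicator (A b) w)"
    by (rule Bochner_Integration.integrable_sum) (rule ii)
  have "integrable M F"
    using Bochner_Integration.integrable_cong[of M M F "\<lambda>w. \<Sum>b\<in>B. c b * indicator (A b) w"] i assms(4) by simp
  moreover have "integral\<^sup>L M F = integral\<^sup>L M (\<lambda>w. \<Sum>b\<in>B. c b * indicator (A b) w)"
    by (rule Bochner_Integration.integral_cong) (auto simp: assms(4))
  moreover have "\<dots> = (\<Sum>b\<in>B. c b * measure M (A b))"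
  proof -
    have "integral\<^sup>L M (\<lambda>w. \<Sum>b\<in>B. c b * indicator (A b) w) = (\<Sum>b\<in>B. integral\<^sup>L M (\<lambda>w. c b * indicator (A b) w))"
      by (rule Bochner_Integration.integral_sum) (use ii in blast)
    also have "\<dots> = (\<Sum>b\<in>B. c b * measure M (A b))"
    proof (rule sum.cong[OF refl])
      fix b assume "b \<in> B"
      then have "A b \<inter> space M = A b" using assms(2) sets.Int_space_eq2 by blast
      then show "integral\<^sup>L M (\<lambda>w. c b * indicator (A b) w) = c b * measure M (A b)"
        by (simp only: integral_mult_right_zero Bochner_Integration.integral_indicator)
    qed
    finally show ?thesis .
  qed
  ultimately show ?thesis by simp
qed

locale setting = prob_space M for M :: "'a measure" +
  fixes r :: "nat \<Rightarrow> 'a \<Rightarrow> bool" and lam :: "nat \<Rightarrow> real" and p :: real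
  assumes meas: "\<And>i. r i \<in> M \<rightarrow>\<^sub>M count_space UNIV"
  and r1: "measure M {w \<in> space M. r 1 w} = p"
  and cond: "\<And>k b. k \<ge> 2 \<Longrightarrow>
           measure M {w \<in> space M. r k w \<and> (\<forall>i\<in>{1..<k}. r i w = b i)}
           = (lam k * p + (1 - lam k) * ((\<Sum>i=1..<k. of_bool (b i)) / real (k - 1)))
             * measure M {w \<in> space M. \<forall>i\<in>{1..<k}. r i w = b i}"
begin

lemma ev_r: "{w \<in> space M. r i w = c} \<in> sets M"
proof -
  have "{w \<in> space M. r i w = c} = r i -` {c} \<inter> space M" by auto
  also have "\<dots> \<in> sets M" using measurable_sets[OF meas, of "{c}"] by simp
  finally show ?thesis .
qed

lemma ev_fin: "finite I \<Longrightarrow> {w \<in> space M. \<forall>i\<in>I. r i w = b i} \<in> sets M"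
  by (rule sets.sets_Collect_finite_All[OF ev_r])

lemma ev_fin2: "finite I \<Longrightarrow> {w \<in> space M. r k w \<and> (\<forall>i\<in>I. r i w = b i)} \<in> sets M"
proof -
  assume "finite I"
  have "{w \<in> space M. r k w \<and> (\<forall>i\<in>I. r i w = b i)} = {w \<in> space M. r k w = True} \<inter> {w \<in> space M. \<forall>i\<in>I. r i w = b i}" by auto
  then show ?thesis using sets.Int[OF ev_r[of k True] ev_fin[OF \<open>finite I\<close>]] by simp
qed

lemma int_pat:
  "integrable M (\<lambda>w. G (pat r N w)) \<and>
   integral\<^sup>L M (\<lambda>w. G (pat r N w)) = (\<Sum>b\<in>Bs N. G b * measure M {w \<in> space M. \<forall>i\<in>{1..<N}. r i w = b i})"
proof (rule simple_int[OF finite_Bs ev_fin])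
  show "finite_measure M" by (rule finite_measure_axioms)
  fix w assume "w \<in> space M"
  have "(\<Sum>b\<in>Bs N. G b * indicator {w \<in> space M. \<forall>i\<in>{1..<N}. r i w = b i} w)
      = (\<Sum>b\<in>Bs N. if b = pat r N w then G b else 0)"
  proof (intro sum.cong refl)
    fix b assume b: "b \<in> Bs N"
    have "w \<in> {w \<in> space M. \<forall>i\<in>{1..<N}. r i w = b i} \<longleftrightarrow> b = pat r N w"
      using \<open>w \<in> space M\<close> pat_eq_iff[OF b, of r w] by auto
    then show "G b * indicator {w \<in> space M. \<forall>i\<in>{1..<N}. r i w = b i} w = (if b = pat r N w then G b else 0)"
      by (simp add: indicator_def)
  qed
  also have "\<dots> = G (pat r N w)" using pat_in_Bs[of r N w] finite_Bs by (simp add: sum.delta')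
  finally show "G (pat r N w) = (\<Sum>b\<in>Bs N. G b * indicator {w \<in> space M. \<forall>i\<in>{1..<N}. r i w = b i} w)" by simp
qed simp

lemma int_gen: fixes f :: "real \<Rightarrow> bool \<Rightarrow> real" assumes "k \<ge> 1" shows "integrable M (\<lambda>w. f (pbar r m w) (r k w))"
proof -
  have "(\<lambda>w. f (pbar r m w) (r k w)) = (\<lambda>w. (\<lambda>b. f (pb b m) (b k)) (pat r (max m k + 1) w))"
  proof
    fix w
    have "k < max m k + 1" by simp
    then have "pat r (max m k + 1) w k = r k w" using assms by (simp add: pat_def)
    moreover have "pbar r m w = pb (pat r (max m k + 1) w) m" by (rule pbar_pat) simp
    ultimately show "f (pbar r m w) (r k w) = (\<lambda>b. f (pb b m) (b k)) (pat r (max m k + 1) w)" by simp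
  qed
  then show ?thesis using conjunct1[OF int_pat[where G="\<lambda>b. f (pb b m) (b k)" and N="max m k + 1"]] by (simp only:)
qed


lemma iX: "k \<ge> 1 \<Longrightarrow> integrable M (\<lambda>w. of_bool (r k w) :: real)"
  using int_gen[of k "\<lambda>x y. of_bool y"] by simp
lemma iP: "integrable M (\<lambda>w. pbar r m w)"
  using int_gen[of 1 "\<lambda>x y. x"] by simp
lemma iP2: "integrable M (\<lambda>w. (pbar r m w)^2)"
  using int_gen[of 1 "\<lambda>x y. x^2"] by simp
lemma iXP: "k \<ge> 1 \<Longrightarrow> integrable M (\<lambda>w. of_bool (r k w) * pbar r m w)"
  using int_gen[of k "\<lambda>x y. of_bool y * x"] by simp

lemma E_X1: "integral\<^sup>L M (\<lambda>w. of_bool (r 1 w) :: real) = p"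
proof -
  have "integral\<^sup>L M (\<lambda>w. of_bool (r 1 w) :: real) = integral\<^sup>L M (indicator {w\<in>space M. r 1 w})"
    by (rule Bochner_Integration.integral_cong) (auto simp: indicator_def)
  also have "\<dots> = measure M ({w\<in>space M. r 1 w} \<inter> space M)"
    by (rule Bochner_Integration.integral_indicator)
  also have "{w\<in>space M. r 1 w} \<inter> space M = {w\<in>space M. r 1 w}" by auto
  finally show ?thesis using r1 by simp
qed

lemma pbar_1: "pbar r 1 w = of_bool (r 1 w)" by (simp add: pbar_def)

lemma pbar_step: assumes "k \<ge> 2"
  shows "pbar r k w = (real (k-1) * pbar r (k-1) w + of_bool (r k w)) / real k"
proof -
  obtain n where k: "k = Suc n" "n \<ge> 1" using assms by (cases k) auto
  show ?thesis unfolding k pbar_def using k(2) by (simp add: field_simps)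
qed

lemma key:
  fixes g :: "(nat \<Rightarrow> bool) \<Rightarrow> real"
  assumes k: "k \<ge> 2"
  shows "integral\<^sup>L M (\<lambda>w. of_bool (r k w) * g (pat r k w))
       = integral\<^sup>L M (\<lambda>w. (lam k * p + (1 - lam k) * pbar r (k-1) w) * g (pat r k w))"
proof -
  define A where "A b = {w \<in> space M. r k w \<and> (\<forall>i\<in>{1..<k}. r i w = b i)}" for b
  define Q where "Q b = lam k * p + (1 - lam k) * ((\<Sum>i=1..<k. of_bool (b i)) / real (k - 1))" for b
  have "integral\<^sup>L M (\<lambda>w. of_bool (r k w) * g (pat r k w)) = (\<Sum>b\<in>Bs k. g b * measure M (A b))"
  proof (rule conjunct2[OF simple_int[OF finite_Bs]])
    show "A b \<in> sets M" for b unfolding A_def by (rule ev_fin2) simp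
    show "finite_measure M" by (rule finite_measure_axioms)
    fix w assume w: "w \<in> space M"
    have "(\<Sum>b\<in>Bs k. g b * indicator (A b) w) = (\<Sum>b\<in>Bs k. if b = pat r k w then g b * of_bool (r k w) else 0)"
    proof (intro sum.cong refl)
      fix b assume b: "b \<in> Bs k"
      have "w \<in> A b \<longleftrightarrow> r k w \<and> b = pat r k w"
        using w pat_eq_iff[OF b, of r w] unfolding A_def by auto
      then show "g b * indicator (A b) w = (if b = pat r k w then g b * of_bool (r k w) else 0)"
        by (auto simp: indicator_def)
    qed
    also have "\<dots> = g (pat r k w) * of_bool (r k w)" using pat_in_Bs[of r k w] finite_Bs by (simp add: sum.delta')
    finally show "of_bool (r k w) * g (pat r k w) = (\<Sum>b\<in>Bs k. g b * indicator (A b) w)" by simp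
  qed
  also have "\<dots> = (\<Sum>b\<in>Bs k. Q b * g b * measure M {w \<in> space M. \<forall>i\<in>{1..<k}. r i w = b i})"
  proof (intro sum.cong refl)
    fix b
    have "measure M (A b) = Q b * measure M {w \<in> space M. \<forall>i\<in>{1..<k}. r i w = b i}"
      unfolding A_def Q_def by (rule cond[OF k])
    then show "g b * measure M (A b) = Q b * g b * measure M {w \<in> space M. \<forall>i\<in>{1..<k}. r i w = b i}"
      by (simp add: mult_ac)
  qed
  also have "\<dots> = integral\<^sup>L M (\<lambda>w. (\<lambda>b. Q b * g b) (pat r k w))"
    using int_pat[where G="\<lambda>b. Q b * g b" and N=k] by simp
  also have "\<dots> = integral\<^sup>L M (\<lambda>w. (lam k * p + (1 - lam k) * pbar r (k-1) w) * g (pat r k w))"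
  proof (rule Bochner_Integration.integral_cong[OF refl])
    fix w
    have "pbar r (k-1) w = pb (pat r k w) (k-1)" using k by (intro pbar_pat) simp
    also have "{1..k-1} = {1..<k}" using k by auto
    then have "pb (pat r k w) (k-1) = (\<Sum>i=1..<k. of_bool (pat r k w i)) / real (k - 1)"
      unfolding pb_def by simp
    finally show "(\<lambda>b. Q b * g b) (pat r k w) = (lam k * p + (1 - lam k) * pbar r (k-1) w) * g (pat r k w)"
      unfolding Q_def by simp
  qed
  finally show ?thesis .
qed

lemma key2:
  fixes f :: "real \<Rightarrow> real"
  assumes k: "k \<ge> 2"
  shows "integral\<^sup>L M (\<lambda>w. of_bool (r k w) * f (pbar r (k-1) w))
       = integral\<^sup>L M (\<lambda>w. (lam k * p + (1 - lam k) * pbar r (k-1) w) * f (pbar r (k-1) w))"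
proof -
  have e: "\<And>w. pbar r (k-1) w = pb (pat r k w) (k-1)" using k by (intro pbar_pat) simp
  show ?thesis using key[OF k, of "\<lambda>b. f (pb b (k-1))"] by (simp only: e)
qed

lemma mean: "k \<ge> 1 \<Longrightarrow> integral\<^sup>L M (\<lambda>w. pbar r k w) = p"
proof (induction k rule: nat_induct_at_least)
  case base
  have "(\<lambda>w. pbar r 1 w) = (\<lambda>w. of_bool (r 1 w))" by (simp add: fun_eq_iff pbar_def)
  then show ?case using E_X1 by simp
next
  case (Suc n)
  have k: "Suc n \<ge> 2" using Suc by simp
  have "integral\<^sup>L M (\<lambda>w. of_bool (r (Suc n) w) * 1) = integral\<^sup>L M (\<lambda>w. (lam (Suc n) * p + (1 - lam (Suc n)) * pbar r n w) * 1)"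
    using key2[OF k, of "\<lambda>_. 1"] by simp
  also have "\<dots> = lam (Suc n) * p + (1 - lam (Suc n)) * p"
    using Suc iP[of n] by (simp add: prob_space)
  finally have EX: "integral\<^sup>L M (\<lambda>w. of_bool (r (Suc n) w) :: real) = p" by (simp add: algebra_simps)
  have "integral\<^sup>L M (\<lambda>w. pbar r (Suc n) w) = integral\<^sup>L M (\<lambda>w. (real n * pbar r n w + of_bool (r (Suc n) w)) / real (Suc n))"
    using pbar_step[OF k] by simp
  also have "\<dots> = (real n * p + p) / real (Suc n)"
    using Suc iP[of n] iX[of "Suc n"] EX by simp
  also have "\<dots> = p" by (simp add: field_simps)
  finally show ?case .
qed

lemma second:
  assumes k: "k \<ge> 2"
  shows "integral\<^sup>L M (\<lambda>w. (pbar r k w)^2) = ((real (k-1))^2 * integral\<^sup>L M (\<lambda>w. (pbar r (k-1) w)^2)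
     + 2 * real (k-1) * (lam k * p * p + (1 - lam k) * integral\<^sup>L M (\<lambda>w. (pbar r (k-1) w)^2)) + p) / (real k)^2"
proof -
  let ?n = "k - 1"
  have n1: "?n \<ge> 1" using k by simp
  have "integral\<^sup>L M (\<lambda>w. of_bool (r k w) * pbar r ?n w) = integral\<^sup>L M (\<lambda>w. (lam k * p + (1 - lam k) * pbar r ?n w) * pbar r ?n w)"
    using key2[OF k, of "\<lambda>x. x"] by simp
  also have "\<dots> = integral\<^sup>L M (\<lambda>w. lam k * p * pbar r ?n w + (1 - lam k) * (pbar r ?n w)^2)"
    by (rule Bochner_Integration.integral_cong) (simp_all add: algebra_simps power2_eq_square)
  also have "\<dots> = lam k * p * p + (1 - lam k) * integral\<^sup>L M (\<lambda>w. (pbar r ?n w)^2)"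
    using iP[of ?n] iP2[of ?n] mean[OF n1] by simp
  finally have EXP: "integral\<^sup>L M (\<lambda>w. of_bool (r k w) * pbar r ?n w) = lam k * p * p + (1 - lam k) * integral\<^sup>L M (\<lambda>w. (pbar r ?n w)^2)" .
  have EX: "integral\<^sup>L M (\<lambda>w. of_bool (r k w) :: real) = p"
  proof -
    have "integral\<^sup>L M (\<lambda>w. of_bool (r k w) * 1) = integral\<^sup>L M (\<lambda>w. (lam k * p + (1 - lam k) * pbar r ?n w) * 1)"
      using key2[OF k, of "\<lambda>_. 1"] by simp
    also have "\<dots> = lam k * p + (1 - lam k) * p"
      using iP[of ?n] mean[OF n1] by (simp add: prob_space)
    finally show ?thesis by (simp add: algebra_simps)
  qed
  have pw: "(pbar r k w)^2 = ((real ?n)^2 * (pbar r ?n w)^2 + 2 * real ?n * (of_bool (r k w) * pbar r ?n w) + of_bool (r k w)) / (real k)^2" for w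
  proof -
    have "(pbar r k w)^2 = ((real ?n * pbar r ?n w + of_bool (r k w)) / real k)^2"
      using pbar_step[OF k] by simp
    also have "\<dots> = ((real ?n)^2 * (pbar r ?n w)^2 + 2 * real ?n * (of_bool (r k w) * pbar r ?n w) + of_bool (r k w)) / (real k)^2"
      by (cases "r k w") (simp_all add: power_divide power2_eq_square algebra_simps)
    finally show ?thesis .
  qed
  have "integral\<^sup>L M (\<lambda>w. (pbar r k w)^2) = integral\<^sup>L M (\<lambda>w. ((real ?n)^2 * (pbar r ?n w)^2 + 2 * real ?n * (of_bool (r k w) * pbar r ?n w) + of_bool (r k w)) / (real k)^2)"
    by (simp only: pw)
  also have "\<dots> = ((real ?n)^2 * integral\<^sup>L M (\<lambda>w. (pbar r ?n w)^2) + 2 * real ?n * integral\<^sup>L M (\<lambda>w. of_bool (r k w) * pbar r ?n w) + integral\<^sup>L M (\<lambda>w. of_bool (r k w) :: real)) / (real k)^2"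
    using iP2[of ?n] iXP[of k ?n] iX[of k] k by simp
  also have "\<dots> = ((real (k-1))^2 * integral\<^sup>L M (\<lambda>w. (pbar r (k-1) w)^2)
     + 2 * real (k-1) * (lam k * p * p + (1 - lam k) * integral\<^sup>L M (\<lambda>w. (pbar r (k-1) w)^2)) + p) / (real k)^2"
    by (simp only: EXP EX)
  finally show ?thesis .
qed


lemma var_eq: "integral\<^sup>L M (\<lambda>w. (pbar r k w - p)^2) = integral\<^sup>L M (\<lambda>w. (pbar r k w)^2) - p^2"
  if "k \<ge> 1" for k
proof -
  have "integral\<^sup>L M (\<lambda>w. (pbar r k w - p)^2) = integral\<^sup>L M (\<lambda>w. (pbar r k w)^2 - 2 * p * pbar r k w + p^2)"
    by (rule Bochner_Integration.integral_cong) (simp_all add: power2_eq_square algebra_simps)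
  also have "\<dots> = integral\<^sup>L M (\<lambda>w. (pbar r k w)^2) - 2 * p * p + p^2"
    using iP[of k] iP2[of k] mean[OF that] by (simp add: prob_space)
  finally show ?thesis by (simp add: power2_eq_square)
qed

lemma V1: "integral\<^sup>L M (\<lambda>w. (pbar r 1 w - p)^2) = p * (1 - p)"
proof -
  have "(\<lambda>w. (pbar r 1 w)^2) = (\<lambda>w. of_bool (r 1 w))" by (simp add: fun_eq_iff pbar_def)
  then show ?thesis using var_eq[of 1] E_X1 by (simp add: power2_eq_square algebra_simps)
qed

lemma Vrec: assumes k: "k \<ge> 2"
  shows "integral\<^sup>L M (\<lambda>w. (pbar r k w - p)^2) =
    real (k - 1) * (real k + 1 - 2 * lam k) / real k ^ 2 * integral\<^sup>L M (\<lambda>w. (pbar r (k-1) w - p)^2)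
    + p * (1 - p) / real k ^ 2"
proof -
  have k1: "k - 1 \<ge> 1" "k \<ge> 1" using k by auto
  have rk: "real (k - 1) = real k - 1" using k by simp
  show ?thesis unfolding var_eq[OF k1(1)] var_eq[OF k1(2)] second[OF k] rk
    using k by (simp add: field_simps power2_eq_square)
qed

end

lemma closed:
  fixes V :: "nat \<Rightarrow> real" and lam :: "nat \<Rightarrow> real" and p :: real
  assumes "V 1 = p * (1 - p)"
    and "\<And>k. k \<ge> 2 \<Longrightarrow> V k = real (k - 1) * (real k + 1 - 2 * lam k) / real k ^ 2 * V (k - 1) + p * (1 - p) / real k ^ 2"
    and "n \<ge> 1"
  shows "V n = p * (1 - p) * (1 / real n ^ 2 +
             (\<Sum>i=1..<n. 1 / real i ^ 2 *
                (\<Prod>j=i+1..n. real (j - 1) * (real j + 1 - 2 * lam j) / real j ^ 2)))"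
  using assms(3)
proof (induction n rule: nat_induct_at_least)
  case base
  then show ?case using assms(1) by simp
next
  case (Suc n)
  define c where "c j = real (j - 1) * (real j + 1 - 2 * lam j) / real j ^ 2" for j
  have pr: "(\<Prod>j=i+1..Suc n. c j) = (\<Prod>j=i+1..n. c j) * c (Suc n)" if "i \<in> {1..<n}" for i
    using that by (simp add: prod.cl_ivl_Suc)
  have "(\<Sum>i=1..<Suc n. 1 / real i ^ 2 * (\<Prod>j=i+1..Suc n. c j))
      = (\<Sum>i=1..<n. 1 / real i ^ 2 * (\<Prod>j=i+1..Suc n. c j)) + 1 / real n ^ 2 * c (Suc n)"
    using Suc by (simp add: sum.atLeastLessThan_Suc)
  also have "(\<Sum>i=1..<n. 1 / real i ^ 2 * (\<Prod>j=i+1..Suc n. c j)) = (\<Sum>i=1..<n. 1 / real i ^ 2 * (\<Prod>j=i+1..n. c j)) * c (Suc n)"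
    by (simp add: sum_distrib_right pr mult_ac) (simp add: sum_distrib_left)
  finally have S: "(\<Sum>i=1..<Suc n. 1 / real i ^ 2 * (\<Prod>j=i+1..Suc n. c j))
      = ((\<Sum>i=1..<n. 1 / real i ^ 2 * (\<Prod>j=i+1..n. c j)) + 1 / real n ^ 2) * c (Suc n)"
    by (simp add: algebra_simps)
  have "V (Suc n) = c (Suc n) * V n + p * (1 - p) / real (Suc n) ^ 2"
    using assms(2)[of "Suc n"] Suc unfolding c_def by simp
  also have "\<dots> = p * (1 - p) * (1 / real (Suc n) ^ 2 + (\<Sum>i=1..<Suc n. 1 / real i ^ 2 * (\<Prod>j=i+1..Suc n. c j)))"
    unfolding S Suc.IH[folded c_def] by (simp add: algebra_simps)
  finally show ?case unfolding c_def .
qed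

theorem theoremA4:
  fixes M :: "'a measure" and r :: "nat \<Rightarrow> 'a \<Rightarrow> bool"
    and lam :: "nat \<Rightarrow> real" and p :: real and n :: nat
  assumes "prob_space M"
    and "0 < p" and "p < 1"
    and "lam 1 = 1"
    and "\<forall>k>1. 0 \<le> lam k \<and> lam k \<le> lam (k - 1)"
    and "\<forall>i. r i \<in> M \<rightarrow>\<^sub>M count_space UNIV"
    and "measure M {w \<in> space M. r 1 w} = p"
    and "\<forall>k\<ge>2. \<forall>b :: nat \<Rightarrow> bool.
           measure M {w \<in> space M. r k w \<and> (\<forall>i\<in>{1..<k}. r i w = b i)}
           = (lam k * p + (1 - lam k) * ((\<Sum>i=1..<k. of_bool (b i)) / real (k - 1)))
             * measure M {w \<in> space M. \<forall>i\<in>{1..<k}. r i w = b i}"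
    and "n \<ge> 1"
  shows "prob_space.expectation M (\<lambda>w. (pbar r n w - p)^2)
         = p * (1 - p) * (1 / real n ^ 2 +
             (\<Sum>i=1..<n. 1 / real i ^ 2 *
                (\<Prod>j=i+1..n. real (j - 1) * (real j + 1 - 2 * lam j) / real j ^ 2)))"
proof -
  interpret setting M r lam p
    by (rule setting.intro[OF assms(1)], unfold_locales) (use assms(6,7,8) in auto)
  show ?thesis
    by (rule closed[where V="\<lambda>k. integral\<^sup>L M (\<lambda>w. (pbar r k w - p)^2)"])
       (use V1 Vrec assms(9) in auto)
qed

end
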